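(* Let the numbers $a,k,n,s$ satisfy $k\geq 2$, $s\geq 1$ and $n-s\geq 4k^3+4|a|(k-1)$. Let the real sequence $x_0,\ldots,x_s$ satisfy \[ x_0\geq \frac{k-1}{2}+\sqrt{kn-a} \] and \[ x_{i+1}\geq x_i\left(1-\frac{1}{x_i^2/(k-1)+n-i-k}\right)\quad\text{for } 0\leq i<s. \] Then for every $i=1,\ldots,s$, \[ x_i\geq\frac{k-1}{2}+\sqrt{k(n-i)-a+1/2}. \] *)

theory Defs
  imports Complex_Main
begin

end

theory Submission
  imports Defs
begin


lemma sqrt_le: fixes u d :: real assumes "u > 0" "d > 0" "d \<le> u^2"
  shows "sqrt (u^2 - d) \<le> u - d/(2*u)"
proof -
  have h: "u - d/(2*u) \<ge> 0" using assms by (simp add: field_simps power2_eq_square)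
  have "(u - d/(2*u))^2 = u^2 - d + d^2/(4*u^2)" using assms by (simp add: field_simps power2_eq_square)
  also have "\<dots> \<ge> u^2 - d" by simp
  finally show ?thesis using h by (metis real_le_lsqrt assms(3) diff_ge_0_iff_ge)
qed

lemma step: fixes u c d D :: real assumes "u > 0" "d > 0" "d \<le> u^2" "D > 0" "c \<ge> 0"
  "d * D \<ge> 2*u*(c+u)"
  shows "(c+u) * (1 - 1/D) \<ge> c + sqrt (u^2 - d)"
proof -
  have "(c+u)/D \<le> d/(2*u)" using assms by (simp add: field_simps)
  hence "(c+u)*(1-1/D) \<ge> c + u - d/(2*u)" by (simp add: algebra_simps)
  thus ?thesis using sqrt_le[OF assms(1-3)] by linarith
qed

lemma mono: fixes L y K m :: real assumes "0 \<le> L" "L \<le> y" "m \<ge> 1" "K > 0"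
  shows "L * (1 - 1/(L^2/K + m)) \<le> y * (1 - 1/(y^2/K + m))"
proof -
  define DL where "DL = L^2/K + m"
  define Dy where "Dy = y^2/K + m"
  have "L^2/K \<ge> 0" "y^2/K \<ge> 0" using assms by auto
  hence p: "DL \<ge> 1" "Dy \<ge> m" using assms unfolding DL_def Dy_def by linarith+
  have "m \<le> Dy * DL" using p assms by (metis mult_le_cancel_left1 mult_mono dual_order.trans less_le_not_le mult.commute order_trans zero_le_one not_le) 
  hence t: "m - y*L/K \<le> Dy*DL" using assms by (smt (verit) divide_nonneg_pos mult_nonneg_nonneg)
  have eq: "y*(1-1/Dy) - L*(1-1/DL) = (y-L)*(1 - (m - y*L/K)/(Dy*DL))"
  proof -
    have "y*DL - L*Dy = (y-L)*(m - y*L/K)" unfolding DL_def Dy_def using assms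
      by (simp add: field_simps power2_eq_square)
    moreover have "y*(1-1/Dy) - L*(1-1/DL) = (y-L) - (y*DL - L*Dy)/(Dy*DL)" using p assms
      by (simp add: field_simps)
    ultimately show ?thesis by (metis (no_types, lifting) diff_divide_distrib mult.commute mult_cancel_left1 div_by_1 times_divide_eq_right right_diff_distrib')
  qed
  have "(m - y*L/K)/(Dy*DL) \<le> 1" using t p assms by (simp add: divide_le_eq_1)
  hence "(y-L)*(1 - (m - y*L/K)/(Dy*DL)) \<ge> 0" using assms by simp
  thus ?thesis using eq unfolding DL_def Dy_def by linarith
qed

lemma A1: fixes r N a K :: real assumes N: "N - 1 \<ge> 4*r^3 + 4*\<bar>a\<bar>*(r-1)" and r: "r \<ge> 2" and K_def: "K = r - 1" shows "r*N \<ge> 4*r^4 + 4*r*\<bar>a\<bar>*K"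
  proof -
    have "N \<ge> 4*r^3 + 4*\<bar>a\<bar>*K" unfolding K_def using N by linarith
    hence "r*N \<ge> r*(4*r^3 + 4*\<bar>a\<bar>*K)" using r mult_left_mono by fastforce
    moreover have "r*(4*r^3 + 4*\<bar>a\<bar>*K) = 4*(r*r^3) + 4*r*\<bar>a\<bar>*K" by (simp add: algebra_simps)
    moreover have "r*r^3 = r^4" by (simp add: power_numeral_reduce)
    ultimately show ?thesis by linarith
  qed
lemma A4: fixes r K :: real assumes r: "r \<ge> 2" and K_def: "K = r - 1" shows "4*r^4 \<ge> r^2*K + r"
  proof -
    have b1: "r^2*K \<le> r^2*r" using r unfolding K_def by (simp add: mult_left_mono)
    have "1 \<le> r^2" using r by (simp add: one_le_power)
    hence b2: "r \<le> r^2*r" using r mult_right_mono[of 1 "r^2" r] by simp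
    have "r^2*r \<ge> 0" using r by simp
    hence b3: "r^2*r \<le> r^2*r*r" using r mult_left_mono[of 1 r "r^2*r"] by simp
    have "r^4 = r^2*r*r" by (simp add: power_numeral_reduce)
    moreover have "r^4 \<ge> 0" using r by simp
    ultimately show ?thesis using b1 b2 b3 by linarith
  qed

lemma keyA: fixes r u a N :: real
  assumes r: "r \<ge> 2" and u: "u \<ge> 0" and uu: "u^2 = r*N - a + e"
    and e: "0 \<le> e" "e \<le> 1/2"
    and N: "N - 1 \<ge> 4*r^3 + 4*\<bar>a\<bar>*(r-1)"
  shows "r*((((r-1)/2+u)^2/(r-1)) + N - r) \<ge> 2*u*((r-1)/2+u)"
proof -
  define K where "K = r - 1"
  have K: "K \<ge> 1" using r K_def by simp
  have rK: "r = K + 1" using K_def by simp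
  have ex: "K*(r*((K/2+u)^2/K + N - r) - 2*u*(K/2+u)) = r*K^2/4 + K*u + r*N + (r-2)*(a-e) - r^2*K"
  proof -
    have "K*(r*((K/2+u)^2/K + N - r) - 2*u*(K/2+u)) = r*K^2/4 + K*u + (r - 2*K)*u^2 + r*K*N - r^2*K"
    proof -
      have q: "(K/2+u)^2/K = K/4 + u + u^2/K" using K by (simp add: field_simps power2_eq_square)
      have "K*(r*(K/4 + u + u^2/K + N - r) - 2*u*(K/2+u)) = r*K^2/4 + r*K*u + r*u^2 + r*K*N - r^2*K - K^2*u - 2*K*u^2"
        using K by (simp add: algebra_simps power2_eq_square)
      also have "\<dots> = r*K^2/4 + K*u + (r - 2*K)*u^2 + r*K*N - r^2*K" unfolding rK by (simp add: algebra_simps power2_eq_square)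
      finally show ?thesis unfolding q .
    qed
    also have "\<dots> = r*K^2/4 + K*u + (r - 2*K)*(r*N - a + e) + r*K*N - r^2*K" using uu by simp
    also have "\<dots> = r*K^2/4 + K*u + r*N + (r-2)*(a-e) - r^2*K" unfolding K_def by (simp add: algebra_simps)
    finally show ?thesis .
  qed
  have a1: "r*N \<ge> 4*r^4 + 4*r*\<bar>a\<bar>*K" using A1[OF N r K_def] .
  have a2: "(r-2)*(a-e) \<ge> -(r*\<bar>a\<bar>) - r"
  proof -
    have c1: "(r-2)*a \<ge> (r-2)*(-\<bar>a\<bar>)" using r by (intro mult_left_mono) auto
    have c2: "(r-2)*e \<le> (r-2)*(1/2)" using r e by (intro mult_left_mono) auto
    have c3: "(r-2)*\<bar>a\<bar> \<le> r*\<bar>a\<bar>" by (simp add: mult_right_mono)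
    show ?thesis using c1 c2 c3 r by (simp add: algebra_simps)
  qed
  have "\<bar>a\<bar>*1 \<le> \<bar>a\<bar>*(4*K)" using K by (intro mult_left_mono) auto
  hence "r*\<bar>a\<bar> \<le> r*(\<bar>a\<bar>*(4*K))" using r by (intro mult_left_mono) auto
  hence a3: "4*r*\<bar>a\<bar>*K \<ge> r*\<bar>a\<bar>" by (simp add: algebra_simps)
  have a4: "4*r^4 \<ge> r^2*K + r" using A4[OF r K_def] .
  have "K*u \<ge> 0" "r*K^2/4 \<ge> 0" using K u r by auto
  hence "K*(r*((K/2+u)^2/K + N - r) - 2*u*(K/2+u)) \<ge> 0" using ex a1 a2 a3 a4 by linarith
  hence "r*((K/2+u)^2/K + N - r) - 2*u*(K/2+u) \<ge> 0" using K by (simp add: zero_le_mult_iff)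
  thus ?thesis unfolding K_def by simp
qed

lemma keyB: fixes r u a N :: real
  assumes r: "r \<ge> 2" and u: "u \<ge> 0" and uu: "u^2 = r*N - a"
    and N: "N - 1 \<ge> 4*r^3 + 4*\<bar>a\<bar>*(r-1)"
  shows "(r - 1/2)*((((r-1)/2+u)^2/(r-1)) + N - r) \<ge> 2*u*((r-1)/2+u)"
proof -
  define K where "K = r - 1"
  have K: "K \<ge> 1" using r K_def by simp
  have rK: "r = K + 1" using K_def by simp
  have q: "(K/2+u)^2/K = K/4 + u + u^2/K" using K by (simp add: field_simps power2_eq_square)
  have "K*((r-1/2)*(K/4 + u + u^2/K + N - r) - 2*u*(K/2+u)) = (r-1/2)*K^2/4 + (r-1/2)*K*u + (r-1/2)*u^2 + (r-1/2)*K*N - (r-1/2)*r*K - K^2*u - 2*K*u^2"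
    using K by (simp add: field_simps power2_eq_square)
  also have "\<dots> = (r-1/2)*K^2/4 + K*u/2 + (1/2 - K)*u^2 + (r-1/2)*K*N - (r-1/2)*r*K" unfolding rK by (simp add: algebra_simps power2_eq_square)
  also have "\<dots> = (r-1/2)*K^2/4 + K*u/2 + (1/2 - K)*(r*N - a) + (r-1/2)*K*N - (r-1/2)*r*K" using uu by simp
  also have "\<dots> = (r-1/2)*K^2/4 + K*u/2 + N/2 + (K-1/2)*a - (r-1/2)*r*K" unfolding rK by (simp add: algebra_simps)
  finally have ex: "K*((r-1/2)*((K/2+u)^2/K + N - r) - 2*u*(K/2+u)) = (r-1/2)*K^2/4 + K*u/2 + N/2 + (K-1/2)*a - (r-1/2)*r*K" unfolding q .
  have c1: "(K-1/2)*a \<ge> (K-1/2)*(-\<bar>a\<bar>)" using K by (intro mult_left_mono) auto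
  have c2: "(K-1/2)*\<bar>a\<bar> \<le> (2*K)*\<bar>a\<bar>" using K by (intro mult_right_mono) auto
  have A: "(K-1/2)*a \<ge> -(2*(K*\<bar>a\<bar>))" using c1 c2 by (simp add: algebra_simps)
  have B: "N/2 \<ge> 2*r^3 + 2*(K*\<bar>a\<bar>)" unfolding K_def using N by (simp add: algebra_simps)
  have C: "(r-1/2)*r*K \<le> r^3" using r K unfolding rK by (simp add: algebra_simps power_numeral_reduce)
  have c6: "r^3 \<ge> 0" "K*u \<ge> 0" "(r-1/2)*K^2/4 \<ge> 0" "K*\<bar>a\<bar> \<ge> 0" "K*r \<ge> 0" using r u K by auto
  have "K*((r-1/2)*((K/2+u)^2/K + N - r) - 2*u*(K/2+u)) \<ge> 0" unfolding ex using A B C c6 by linarith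
  hence "(r-1/2)*((K/2+u)^2/K + N - r) - 2*u*(K/2+u) \<ge> 0" using K by (simp add: zero_le_mult_iff)
  thus ?thesis unfolding K_def by simp
qed

lemma bigN: fixes r a N :: real assumes r: "r \<ge> 2" and N: "N - 1 \<ge> 4*r^3 + 4*\<bar>a\<bar>*(r-1)"
  shows "r*N - a \<ge> r"
proof -
  have "r^3 \<ge> 0" using r by simp
  moreover have "\<bar>a\<bar>*1 \<le> \<bar>a\<bar>*(4*(r-1))" using r by (intro mult_left_mono) auto
  hence "\<bar>a\<bar> \<le> 4*\<bar>a\<bar>*(r-1)" by (simp add: algebra_simps)
  ultimately have "N \<ge> 1 + \<bar>a\<bar>" using N by linarith
  hence "r*N \<ge> r*(1 + \<bar>a\<bar>)" using r by (intro mult_left_mono) auto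
  moreover have "r*\<bar>a\<bar> \<ge> 1*\<bar>a\<bar>" using r by (intro mult_right_mono) auto
  ultimately show ?thesis by (simp add: algebra_simps)
qed

theorem lemma4:
  fixes a :: real and k n s :: nat and x :: "nat \<Rightarrow> real"
  assumes hk: "k \<ge> 2" and hs: "s \<ge> 1"
    and hn: "real n - real s \<ge> 4 * real k ^ 3 + 4 * \<bar>a\<bar> * (real k - 1)"
    and hx0: "x 0 \<ge> (real k - 1) / 2 + sqrt (real k * real n - a)"
    and hrec: "\<And>i. i < s \<Longrightarrow>
       x (Suc i) \<ge> x i * (1 - 1 / ((x i)\<^sup>2 / (real k - 1) + real n - real i - real k))"
  shows "\<forall>i\<in>{1..s}. x i \<ge> (real k - 1) / 2 + sqrt (real k * (real n - real i) - a + 1/2)"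
proof -
  define r where "r = real k"
  define c where "c = (r - 1)/2"
  have r: "r \<ge> 2" using hk r_def by simp
  have c0: "c \<ge> 0" using r c_def by simp
  define L where "L i = (if i = 0 then c + sqrt (r * real n - a) else c + sqrt (r * (real n - real i) - a + 1/2))" for i
  have ind: "i \<le> s \<Longrightarrow> x i \<ge> L i" for i
  proof (induction i)
    case 0
    then show ?case using hx0 unfolding L_def c_def r_def by simp
  next
    case (Suc i)
    hence iS: "i < s" by simp
    hence IH: "x i \<ge> L i" using Suc.IH by simp
    define N where "N = real n - real i"
    have NN: "N - 1 \<ge> 4*r^3 + 4*\<bar>a\<bar>*(r-1)" using hn iS unfolding N_def r_def by simp
    have bN: "r*N - a \<ge> r" using bigN[OF r NN] .
    define e :: real where "e = (if i = 0 then 0 else 1/2)"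
    define d where "d = (if i = 0 then r - 1/2 else r)"
    have e: "0 \<le> e" "e \<le> 1/2" unfolding e_def by auto
    define u where "u = sqrt (r*N - a + e)"
    have uu: "u^2 = r*N - a + e" unfolding u_def using bN r e by simp
    have u0: "u > 0" unfolding u_def using bN r e by simp
    have Li: "L i = c + u" unfolding L_def u_def e_def N_def by simp
    have du: "d \<le> u^2" "d > 0" unfolding uu d_def using bN r e e_def by auto
    define m where "m = real n - real i - r"
    have m1: "m \<ge> 1"
    proof -
      have "1 \<le> r^2" using r by (simp add: one_le_power)
      hence "1*r \<le> r^2*r" using r by (intro mult_right_mono) auto
      moreover have "r^3 = r^2*r" by (simp add: power_numeral_reduce)
      moreover have "4*\<bar>a\<bar>*(r-1) \<ge> 0" using r by simp
      ultimately show ?thesis using NN r unfolding m_def N_def by linarith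
    qed
    define D where "D = (c+u)^2/(r-1) + N - r"
    have DD: "D = (c+u)^2/(r-1) + m" unfolding D_def m_def N_def by simp
    have "(c+u)^2/(r-1) \<ge> 0" using r by simp
    hence Dpos: "D > 0" unfolding DD using m1 by linarith
    have key: "d*D \<ge> 2*u*(c+u)"
    proof (cases "i = 0")
      case True
      then show ?thesis using keyB[OF r less_imp_le[OF u0] _ NN] uu unfolding d_def D_def c_def e_def by simp
    next
      case False
      then show ?thesis using keyA[OF r less_imp_le[OF u0] _ e NN] uu unfolding d_def D_def c_def e_def by simp
    qed
    have st: "(c+u)*(1-1/D) \<ge> c + sqrt (u^2 - d)" using step[OF u0 du(2) du(1) Dpos c0 key] .
    have mo: "L i * (1 - 1/((L i)^2/(r-1) + m)) \<le> x i * (1 - 1/((x i)^2/(r-1) + m))"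
      using mono[OF _ IH m1, of "r-1"] c0 u0 r unfolding Li by simp
    have rec: "x (Suc i) \<ge> x i * (1 - 1/((x i)^2/(r-1) + m))"
      using hrec[OF iS] unfolding m_def r_def by (simp add: algebra_simps)
    have "u^2 - d = r*(real n - real (Suc i)) - a + 1/2"
      unfolding uu d_def e_def N_def by (simp add: algebra_simps)
    hence "L (Suc i) = c + sqrt (u^2 - d)" unfolding L_def by simp
    thus ?case using st mo rec unfolding Li DD by linarith
  qed
  show ?thesis
  proof
    fix i assume "i \<in> {1..s}"
    hence "i \<le> s" "i \<noteq> 0" by auto
    thus "x i \<ge> (real k - 1) / 2 + sqrt (real k * (real n - real i) - a + 1/2)"
      using ind[of i] unfolding L_def c_def r_def by simp
  qed
qed

end
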